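(* Let $d\ge3$, $n\ge1$ and $0\le c<\frac1{d(d-1)}$. For $\epsilon\ge0$ with $c+\epsilon\le\frac1{d(d-1)}$ let $$\rho(c,\epsilon)=\Big(\frac1{2d}-\frac{d-1}2(c+\epsilon)\Big)\sum_{i=0}^{d-1}|ii\rangle\langle ii|+\Big(\frac1{d(d-1)}+\epsilon\Big)\sum_{i<j}|\psi^-_{ij}\rangle\langle\psi^-_{ij}|+c\sum_{i<j}|\psi^+_{ij}\rangle\langle\psi^+_{ij}|.$$ Then there exists $\epsilon_0=\epsilon_0(c,n)>0$ such that for all $0\le\epsilon\le\epsilon_0$, $\rho(c,\epsilon)$ is pseudo $n$-copy undistillable, i.e. $\langle\psi|(\rho(c,\epsilon)^{PT})^{\otimes n}|\psi\rangle\ge0$ for every $|\psi\rangle\in(\mathbb{C}^d)^{\otimes n}_A\otimes(\mathbb{C}^d)^{\otimes n}_B$ of Schmidt rank two.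
   Context: $|\psi^{\pm}_{ij}\rangle=\frac1{\sqrt2}(|ij\rangle\pm|ji\rangle)$, sums over $0\le i<j\le d-1$. $\rho^{PT}$ is the partial transpose on the second factor of $\mathbb{C}^d\otimes\mathbb{C}^d$. The space $(\mathbb{C}^d\otimes\mathbb{C}^d)^{\otimes n}$ is regarded as bipartite with the first factor of each copy belonging to $A$; Schmidt rank is with respect to this bipartition. *)

theory Defs
  imports Complex_Main "HOL-Library.Complex_Order"
begin

text \<open>Two-qudit space C^d (x) C^d: basis vectors indexed by pairs (i,j), i,j < d.
  Vectors and operators are represented by their coordinates / matrix entries.\<close>

definition ket2 :: "nat \<Rightarrow> nat \<Rightarrow> nat \<times> nat \<Rightarrow> complex" where
  "ket2 i j = (\<lambda>x. if x = (i, j) then 1 else 0)"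

definition psi_pm :: "complex \<Rightarrow> nat \<Rightarrow> nat \<Rightarrow> nat \<times> nat \<Rightarrow> complex" where
  "psi_pm s i j = (\<lambda>x. (ket2 i j x + s * ket2 j i x) / complex_of_real (sqrt 2))"

definition outer :: "('a \<Rightarrow> complex) \<Rightarrow> 'a \<Rightarrow> 'a \<Rightarrow> complex" where
  "outer v = (\<lambda>x y. v x * cnj (v y))"

definition rho :: "nat \<Rightarrow> real \<Rightarrow> real \<Rightarrow> nat \<times> nat \<Rightarrow> nat \<times> nat \<Rightarrow> complex" where
  "rho d c \<epsilon> = (\<lambda>x y.
      complex_of_real (1 / (2 * real d) - (real d - 1) / 2 * (c + \<epsilon>))
        * (\<Sum>i<d. outer (ket2 i i) x y)
    + complex_of_real (1 / (real d * (real d - 1)) + \<epsilon>)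
        * (\<Sum>i<d. \<Sum>j\<in>{i<..<d}. outer (psi_pm (-1) i j) x y)
    + complex_of_real c
        * (\<Sum>i<d. \<Sum>j\<in>{i<..<d}. outer (psi_pm 1 i j) x y))"

definition ptrans :: "(nat \<times> nat \<Rightarrow> nat \<times> nat \<Rightarrow> complex) \<Rightarrow> nat \<times> nat \<Rightarrow> nat \<times> nat \<Rightarrow> complex" where
  "ptrans M = (\<lambda>(i1, j1) (i2, j2). M (i1, j2) (i2, j1))"

text \<open>Index set of (C^d)^{(x) n}: lists of length n with entries < d.\<close>
definition idx :: "nat \<Rightarrow> nat \<Rightarrow> nat list set" where
  "idx d n = {xs. length xs = n \<and> set xs \<subseteq> {..<d}}"

text \<open>n-fold tensor power of a two-qudit operator, regrouped as A = first factors,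
  B = second factors: entry <a,b| M^{(x)n} |a',b'> = prod_k <a_k b_k| M |a'_k b'_k>.\<close>
definition tpow :: "nat \<Rightarrow> (nat \<times> nat \<Rightarrow> nat \<times> nat \<Rightarrow> complex)
    \<Rightarrow> nat list \<Rightarrow> nat list \<Rightarrow> nat list \<Rightarrow> nat list \<Rightarrow> complex" where
  "tpow n M a b a' b' = (\<Prod>k<n. M (a ! k, b ! k) (a' ! k, b' ! k))"

text \<open>A vector psi in (C^d)^{(x)n}_A (x) (C^d)^{(x)n}_B is given by coefficients psi a b,
  a, b \<in> idx d n. Its Schmidt rank is the least r such that psi is a sum of r product vectors.\<close>
definition schmidt_rank :: "nat \<Rightarrow> nat \<Rightarrow> (nat list \<Rightarrow> nat list \<Rightarrow> complex) \<Rightarrow> nat" where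
  "schmidt_rank d n \<psi> = (LEAST r. \<exists>u v :: nat \<Rightarrow> nat list \<Rightarrow> complex.
      \<forall>a\<in>idx d n. \<forall>b\<in>idx d n. \<psi> a b = (\<Sum>k<r. u k a * v k b))"

definition expval :: "nat \<Rightarrow> nat \<Rightarrow> (nat \<times> nat \<Rightarrow> nat \<times> nat \<Rightarrow> complex)
    \<Rightarrow> (nat list \<Rightarrow> nat list \<Rightarrow> complex) \<Rightarrow> complex" where
  "expval d n M \<psi> = (\<Sum>a\<in>idx d n. \<Sum>b\<in>idx d n. \<Sum>a'\<in>idx d n. \<Sum>b'\<in>idx d n.
      cnj (\<psi> a b) * tpow n M a b a' b' * \<psi> a' b')"

end

theory Submission
  imports Defs "HOL-Analysis.Analysis"
begin

lemma sum_delta2: "finite A \<Longrightarrow> (\<Sum>j\<in>A. if j = q \<and> P then c else 0) = (if q \<in> A \<and> P then c else (0::'a::comm_monoid_add))"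
  by (cases P) (simp_all add: sum.delta)

lemma sum_pair_supp:
  fixes f :: "nat \<Rightarrow> nat \<Rightarrow> 'a::comm_monoid_add"
  assumes "\<And>i j. i < j \<Longrightarrow> \<not> ((i = p \<and> j = q) \<or> (i = q \<and> j = p)) \<Longrightarrow> f i j = 0"
  shows "(\<Sum>i<d. \<Sum>j\<in>{i<..<d}. f i j) = (if p < q \<and> q < d then f p q else if q < p \<and> p < d then f q p else 0)"
proof -
  have "(\<Sum>i<d. \<Sum>j\<in>{i<..<d}. f i j) = (\<Sum>i<d. \<Sum>j\<in>{i<..<d}. (if j = q \<and> i = p then f p q else 0) + (if j = p \<and> (i = q \<and> p \<noteq> q) then f q p else 0))"
    by (intro sum.cong refl) (use assms in auto)
  also have "\<dots> = (\<Sum>i<d. (if i = p \<and> p < q \<and> q < d then f p q else 0) + (if i = q \<and> q < p \<and> p < d then f q p else 0))"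
    apply (intro sum.cong refl)
    apply (simp only: sum.distrib sum_delta2 finite_greaterThanLessThan greaterThanLessThan_iff lessThan_iff)
    apply (intro arg_cong2[where f="(+)"] if_cong refl; auto)
    done
  also have "\<dots> = (if p < q \<and> q < d then f p q else if q < p \<and> p < d then f q p else 0)"
    by (simp only: sum.distrib sum_delta2[where P="_ \<and> _", simplified conj_assoc[symmetric]] finite_lessThan lessThan_iff) auto
  finally show ?thesis .
qed

lemma sum_ket_diag: "(\<Sum>i<d. outer (ket2 i i) (p,q) (r,s)) = (if p = q \<and> r = s \<and> p = r \<and> p < d then 1 else 0)"
proof -
  have "outer (ket2 i i) (p,q) (r,s) = (if i = p then (if p = q \<and> r = s \<and> p = r then 1 else 0) else 0)" for i
    by (auto simp: outer_def ket2_def)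
  then show ?thesis by (simp add: sum.delta')
qed

lemma sqrt2c: "complex_of_real (sqrt 2) * complex_of_real (sqrt 2) = 2"
  by (simp flip: of_real_mult)

lemma psi_z: "i < j \<Longrightarrow> \<not> ((i = p \<and> j = q) \<or> (i = q \<and> j = p)) \<Longrightarrow> outer (psi_pm \<sigma> i j) (p,q) (r,s) = 0"
  unfolding outer_def psi_pm_def ket2_def by auto

lemma psi_pq: "p \<noteq> q \<Longrightarrow> cnj \<sigma> = \<sigma> \<Longrightarrow> outer (psi_pm \<sigma> p q) (p,q) (r,s) = ((if r = p \<and> s = q then 1 else 0) + (if r = q \<and> s = p then \<sigma> else 0)) / 2"
  unfolding outer_def psi_pm_def ket2_def by (simp add: sqrt2c complex_cnj_divide)

lemma psi_qp: "p \<noteq> q \<Longrightarrow> cnj \<sigma> = \<sigma> \<Longrightarrow> \<sigma> * \<sigma> = 1 \<Longrightarrow> outer (psi_pm \<sigma> q p) (p,q) (r,s) = ((if r = p \<and> s = q then 1 else 0) + (if r = q \<and> s = p then \<sigma> else 0)) / 2"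
  unfolding outer_def psi_pm_def ket2_def by (simp add: sqrt2c complex_cnj_divide algebra_simps)

lemma sum_psi: assumes "cnj \<sigma> = \<sigma>" "\<sigma> * \<sigma> = 1"
  shows "(\<Sum>i<d. \<Sum>j\<in>{i<..<d}. outer (psi_pm \<sigma> i j) (p,q) (r,s)) =
    (if p < d \<and> q < d \<and> p \<noteq> q then
      ((if r = p \<and> s = q then 1 else 0) + (if r = q \<and> s = p then \<sigma> else 0)) / 2 else 0)"
  apply (subst sum_pair_supp[of p q "\<lambda>i j. outer (psi_pm \<sigma> i j) (p,q) (r,s)", OF psi_z])
    apply assumption+
  apply (cases "p < q"; cases "q < p"; cases "p < d"; cases "q < d")
  apply (simp_all add: psi_pq[OF _ assms(1)] psi_qp[OF _ assms])
  done

definition aa :: "nat \<Rightarrow> real \<Rightarrow> real \<Rightarrow> real" where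
  "aa d c e = 1 / (2 * real d) - (real d - 1) / 2 * (c + e)"
definition mu :: "nat \<Rightarrow> real \<Rightarrow> real \<Rightarrow> real" where
  "mu d c e = (1 / (real d * (real d - 1)) + e + c) / 2"
definition nu :: "nat \<Rightarrow> real \<Rightarrow> real \<Rightarrow> real" where
  "nu d c e = (c - (1 / (real d * (real d - 1)) + e)) / 2"

definition Xr :: "nat \<Rightarrow> real \<Rightarrow> real \<Rightarrow> nat \<times> nat \<Rightarrow> nat \<times> nat \<Rightarrow> real" where
  "Xr d c e = (\<lambda>(i1,j1) (i2,j2). if i1 < d \<and> j1 < d \<and> i2 < d \<and> j2 < d then
     (if i1 = j1 \<and> i2 = j2 \<and> i1 = i2 then aa d c e
      else if i1 = i2 \<and> j1 = j2 then mu d c e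
      else if i1 = j1 \<and> i2 = j2 then nu d c e else 0) else 0)"

lemma ptrans_rho: "ptrans (rho d c e) x y = complex_of_real (Xr d c e x y)"
proof -
  obtain i1 j1 i2 j2 where xy: "x = (i1,j1)" "y = (i2,j2)" by (cases x, cases y) auto
  have m1: "cnj (-1::complex) = -1" "(-1::complex) * -1 = 1" by simp_all
  have X: "Xr d c e (i1,j1) (i2,j2) = (if i1 < d \<and> j1 < d \<and> i2 < d \<and> j2 < d then
     (if i1 = j1 \<and> i2 = j2 \<and> i1 = i2 then aa d c e
      else if i1 = i2 \<and> j1 = j2 then mu d c e
      else if i1 = j1 \<and> i2 = j2 then nu d c e else 0) else 0)" by (simp add: Xr_def)
  show ?thesis
    unfolding xy ptrans_def rho_def X
    apply (simp only: case_prod_conv sum_ket_diag sum_psi[OF m1] sum_psi[of 1, simplified])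
    apply (cases "i1 = j1 \<and> i2 = j2 \<and> i1 = i2")
     apply (auto simp: aa_def)[1]
    apply (cases "i1 = i2 \<and> j1 = j2")
     apply (simp add: mu_def)[1]
    apply (cases "i1 = j1 \<and> i2 = j2")
     apply (simp add: nu_def add_divide_distrib)[1]
    apply (subgoal_tac "\<not> (i1 = j2 \<and> i2 = j1 \<and> i1 = i2 \<and> i1 < d) \<and> \<not> (i2 = i1 \<and> j1 = j2) \<and> \<not> (i2 = j2 \<and> j1 = i1)")
     apply (simp only: if_False if_not_P) apply simp
    apply blast
    done
qed

definition lsts :: "'a set \<Rightarrow> nat \<Rightarrow> 'a list set" where
  "lsts A n = {xs. length xs = n \<and> set xs \<subseteq> A}"

lemma idx_lsts: "idx d n = lsts {..<d} n"
  by (simp add: idx_def lsts_def)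

lemma finite_lsts: "finite A \<Longrightarrow> finite (lsts A n)"
  unfolding lsts_def using finite_lists_length_eq[of A n] by (simp add: conj_commute)

lemma lsts_0 [simp]: "lsts A 0 = {[]}"
  by (auto simp: lsts_def)

lemma lsts_Suc: "lsts A (Suc n) = (\<lambda>(x,xs). x # xs) ` (A \<times> lsts A n)"
proof (rule set_eqI)
  fix ys show "ys \<in> lsts A (Suc n) \<longleftrightarrow> ys \<in> (\<lambda>(x,xs). x # xs) ` (A \<times> lsts A n)"
    by (cases ys) (auto simp: lsts_def)
qed

lemma sum_lsts_Suc: "finite A \<Longrightarrow> sum f (lsts A (Suc n)) = (\<Sum>x\<in>A. \<Sum>xs\<in>lsts A n. f (x # xs))"
proof -
  have inj: "inj_on (\<lambda>(x,xs). x # xs) (A \<times> lsts A n)" by (auto simp: inj_on_def)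
  show ?thesis
    unfolding lsts_Suc sum.reindex[OF inj] sum.cartesian_product
    by (intro sum.cong refl) auto
qed

lemma prod_sum_lsts:
  fixes h :: "nat \<Rightarrow> 'r \<Rightarrow> 'a::comm_semiring_1"
  assumes "finite R"
  shows "(\<Prod>k<n. \<Sum>r\<in>R. h k r) = (\<Sum>ws\<in>lsts R n. \<Prod>k<n. h k (ws ! k))"
proof (induction n arbitrary: h)
  case 0
  then show ?case by simp
next
  case (Suc n)
  have "(\<Prod>k<Suc n. \<Sum>r\<in>R. h k r) = (\<Sum>r\<in>R. h 0 r) * (\<Prod>k<n. \<Sum>r\<in>R. h (Suc k) r)"
    by (simp only: prod.lessThan_Suc_shift)
  also have "\<dots> = (\<Sum>r\<in>R. h 0 r) * (\<Sum>ws\<in>lsts R n. \<Prod>k<n. h (Suc k) (ws ! k))"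
    using Suc by simp
  also have "\<dots> = (\<Sum>r\<in>R. \<Sum>ws\<in>lsts R n. h 0 r * (\<Prod>k<n. h (Suc k) (ws ! k)))"
    by (simp add: sum_distrib_left sum_distrib_right sum.swap[of _ R])
  also have "\<dots> = (\<Sum>ws\<in>lsts R (Suc n). \<Prod>k<Suc n. h k (ws ! k))"
    unfolding sum_lsts_Suc[OF assms] by (simp only: prod.lessThan_Suc_shift nth_Cons_0 nth_Cons_Suc)
  finally show ?case .
qed

lemma sum_idx_Suc: "sum f (idx d (Suc n)) = (\<Sum>i<d. \<Sum>a\<in>idx d n. f (i # a))"
  unfolding idx_lsts by (rule sum_lsts_Suc) simp

lemma finite_idx: "finite (idx d n)"
  unfolding idx_lsts by (rule finite_lsts) simp

lemma idx_0 [simp]: "idx d 0 = {[]}"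
  unfolding idx_lsts by simp

lemma Cons_idx: "i < d \<Longrightarrow> a \<in> idx d n \<Longrightarrow> i # a \<in> idx d (Suc n)"
  by (simp add: idx_def)

lemma idx_SucE: "x \<in> idx d (Suc n) \<Longrightarrow> (\<And>i a. x = i # a \<Longrightarrow> i < d \<Longrightarrow> a \<in> idx d n \<Longrightarrow> P) \<Longrightarrow> P"
  by (cases x) (auto simp: idx_def)

lemma idx_nth: "a \<in> idx d n \<Longrightarrow> k < n \<Longrightarrow> a ! k < d"
  by (auto simp: idx_def)
     (metis lessThan_iff nth_mem subsetD)

definition lam :: "nat \<Rightarrow> real \<Rightarrow> real" where
  "lam d c = - real d * nu d c 0"

definition wv :: "nat \<Rightarrow> real \<Rightarrow> nat \<times> nat \<Rightarrow> nat \<times> nat \<Rightarrow> real" where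
  "wv d c = (\<lambda>(i,j) (p,q). if i \<noteq> j then (if p = i \<and> q = j then sqrt (mu d c 0) else 0)
      else (if p = q \<and> p < d then sqrt (lam d c) * ((if p = i then 1 else 0) - 1 / real d) else 0))"

lemma gram:
  assumes d: "d \<ge> 2" and c: "0 \<le> c" "c \<le> 1 / (real d * (real d - 1))"
  shows "Xr d c 0 x y = (\<Sum>r\<in>{..<d}\<times>{..<d}. wv d c r x * wv d c r y)"
proof -
  obtain p q p' q' where xy: "x = (p,q)" "y = (p',q')" by (cases x, cases y) auto
  have mu0: "mu d c 0 \<ge> 0" using c d by (simp add: mu_def)
  have lam0: "lam d c \<ge> 0" using c d by (simp add: lam_def nu_def mult_nonneg_nonpos)
  define A where "A = (\<lambda>r. if r = x then (if p \<noteq> q \<and> x = y then mu d c 0 else 0) else 0)"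
  define G where "G = (\<lambda>i. if p = q \<and> p < d \<and> p' = q' \<and> p' < d then
      lam d c * (((if p = i then 1 else 0) - 1 / real d) * ((if p' = i then 1 else 0) - 1 / real d)) else 0)"
  define B where "B = (\<lambda>(i::nat,j::nat). if j = i then G i else 0)"
  have split: "wv d c r x * wv d c r y = A r + B r" for r
  proof -
    obtain i j where r: "r = (i,j)" by (cases r) auto
    show ?thesis
    proof (cases "i = j")
      case True
      then show ?thesis using lam0 unfolding r xy A_def B_def G_def wv_def
        by (auto simp: mult_ac)
    next
      case False
      then show ?thesis using mu0 unfolding r xy A_def B_def G_def wv_def
        by auto
    qed
  qed
  have sA: "(\<Sum>r\<in>{..<d}\<times>{..<d}. A r) = (if p \<noteq> q \<and> x = y \<and> p < d \<and> q < d then mu d c 0 else 0)"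
    unfolding A_def by (simp add: sum.delta' xy)
  have sB: "(\<Sum>r\<in>{..<d}\<times>{..<d}. B r) = (\<Sum>i<d. G i)"
    unfolding B_def sum.cartesian_product[symmetric] by (simp add: sum.delta)
  have sG: "(\<Sum>i<d. G i) = (if p = q \<and> p < d \<and> p' = q' \<and> p' < d then
      lam d c * ((if p = p' then 1 else 0) - 1 / real d) else 0)"
  proof (cases "p = q \<and> p < d \<and> p' = q' \<and> p' < d")
    case True
    have "(\<Sum>i<d. ((if p = i then 1 else 0) - 1 / real d) * ((if p' = i then 1 else (0::real)) - 1 / real d))
       = (\<Sum>i<d. (if p = i then (if p' = i then 1 else 0) else 0) - (if p = i then 1 / real d else 0)
              - (if p' = i then 1 / real d else 0) + 1 / (real d * real d))"
      by (intro sum.cong refl) (auto simp: field_simps)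
    also have "\<dots> = (if p = p' then 1 else 0) - 1 / real d - 1 / real d + real d * (1 / (real d * real d))"
      using True d by (simp only: sum.distrib sum_subtractf sum.delta finite_lessThan lessThan_iff sum_constant card_lessThan) simp
    also have "\<dots> = (if p = p' then 1 else 0) - 1 / real d"
      using d by (simp add: field_simps)
    finally show ?thesis using True unfolding G_def by (simp add: sum_distrib_left[symmetric])
  next
    case False
    have G0: "G i = 0" for i unfolding G_def by (simp only: if_not_P[OF False] if_False)
    show ?thesis by (simp only: G0 sum.neutral_const if_not_P[OF False] if_False)
  qed
  have "(\<Sum>r\<in>{..<d}\<times>{..<d}. wv d c r x * wv d c r y) = 
     (if p \<noteq> q \<and> x = y \<and> p < d \<and> q < d then mu d c 0 else 0) +
     (if p = q \<and> p < d \<and> p' = q' \<and> p' < d then lam d c * ((if p = p' then 1 else 0) - 1 / real d) else 0)"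
    unfolding split sum.distrib sA sB sG ..
  also have "\<dots> = Xr d c 0 x y"
  proof -
    have dpos: "real d > 0" using d by simp
    have d1: "real d - 1 \<noteq> 0" using d by simp
    have ar1: "lam d c * (1 - 1 / real d) = aa d c 0"
      unfolding lam_def nu_def aa_def using dpos d1 by (simp add: field_simps)
    have ar2: "lam d c * (0 - 1 / real d) = nu d c 0"
      unfolding lam_def using dpos by (simp add: field_simps)
    have X: "Xr d c 0 (p,q) (p',q') = (if p < d \<and> q < d \<and> p' < d \<and> q' < d then
     (if p = q \<and> p' = q' \<and> p = p' then aa d c 0
      else if p = p' \<and> q = q' then mu d c 0
      else if p = q \<and> p' = q' then nu d c 0 else 0) else 0)" by (simp add: Xr_def)
    show ?thesis unfolding X xy
      apply (cases "p = q \<and> p' = q' \<and> p = p'")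
       apply (use ar1 in auto)[1]
      apply (cases "p = p' \<and> q = q'")
       apply (auto)[1]
      apply (cases "p = q \<and> p' = q'")
       apply (use ar2 in auto)[1]
      apply (subgoal_tac "\<not> (p \<noteq> q \<and> (p, q) = (p', q') \<and> p < d \<and> q < d) \<and> \<not> (p = q \<and> p < d \<and> p' = q' \<and> p' < d)")
       apply (simp only: if_not_P if_False) apply simp
      apply auto
      done
  qed
  finally show ?thesis ..
qed

lemma swap_out4:
  "(\<Sum>a\<in>A. \<Sum>b\<in>B. \<Sum>a'\<in>A'. \<Sum>b'\<in>B'. \<Sum>w\<in>Q. T a b a' b' w) =
   (\<Sum>w\<in>Q. \<Sum>a\<in>A. \<Sum>b\<in>B. \<Sum>a'\<in>A'. \<Sum>b'\<in>B'. T a b a' b' w)"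
proof -
  have s1: "\<And>a b a'. (\<Sum>b'\<in>B'. \<Sum>w\<in>Q. T a b a' b' w) = (\<Sum>w\<in>Q. \<Sum>b'\<in>B'. T a b a' b' w)" by (rule sum.swap)
  have s2: "\<And>a b. (\<Sum>a'\<in>A'. \<Sum>w\<in>Q. \<Sum>b'\<in>B'. T a b a' b' w) = (\<Sum>w\<in>Q. \<Sum>a'\<in>A'. \<Sum>b'\<in>B'. T a b a' b' w)" by (rule sum.swap)
  have s3: "\<And>a. (\<Sum>b\<in>B. \<Sum>w\<in>Q. \<Sum>a'\<in>A'. \<Sum>b'\<in>B'. T a b a' b' w) = (\<Sum>w\<in>Q. \<Sum>b\<in>B. \<Sum>a'\<in>A'. \<Sum>b'\<in>B'. T a b a' b' w)" by (rule sum.swap)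
  have s4: "(\<Sum>a\<in>A. \<Sum>w\<in>Q. \<Sum>b\<in>B. \<Sum>a'\<in>A'. \<Sum>b'\<in>B'. T a b a' b' w) = (\<Sum>w\<in>Q. \<Sum>a\<in>A. \<Sum>b\<in>B. \<Sum>a'\<in>A'. \<Sum>b'\<in>B'. T a b a' b' w)" by (rule sum.swap)
  show ?thesis by (simp only: s1 s2 s3 s4)
qed

lemma sum4_factor:
  fixes F :: "'a \<Rightarrow> 'b \<Rightarrow> 'c::comm_semiring_1"
  shows "(\<Sum>a\<in>A. \<Sum>b\<in>B. \<Sum>a'\<in>A. \<Sum>b'\<in>B. F a b * (\<Sum>ws\<in>Q. G ws a b * H ws a' b') * K a' b') =
    (\<Sum>ws\<in>Q. (\<Sum>a\<in>A. \<Sum>b\<in>B. F a b * G ws a b) * (\<Sum>a'\<in>A. \<Sum>b'\<in>B. H ws a' b' * K a' b'))"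
proof -
  have "(\<Sum>a\<in>A. \<Sum>b\<in>B. \<Sum>a'\<in>A. \<Sum>b'\<in>B. F a b * (\<Sum>ws\<in>Q. G ws a b * H ws a' b') * K a' b') =
    (\<Sum>a\<in>A. \<Sum>b\<in>B. \<Sum>a'\<in>A. \<Sum>b'\<in>B. \<Sum>ws\<in>Q. F a b * G ws a b * (H ws a' b' * K a' b'))"
    by (intro sum.cong refl) (simp add: sum_distrib_left sum_distrib_right mult_ac)
  also have "\<dots> = (\<Sum>ws\<in>Q. \<Sum>a\<in>A. \<Sum>b\<in>B. \<Sum>a'\<in>A. \<Sum>b'\<in>B. F a b * G ws a b * (H ws a' b' * K a' b'))"
    by (rule swap_out4)
  also have "\<dots> = (\<Sum>ws\<in>Q. (\<Sum>a\<in>A. \<Sum>b\<in>B. F a b * G ws a b) * (\<Sum>a'\<in>A. \<Sum>b'\<in>B. H ws a' b' * K a' b'))"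
    by (intro sum.cong refl) (simp only: sum_distrib_right, simp only: sum_distrib_left mult.assoc)
  finally show ?thesis .
qed

definition Wp :: "nat \<Rightarrow> real \<Rightarrow> nat \<Rightarrow> (nat \<times> nat) list \<Rightarrow> nat list \<Rightarrow> nat list \<Rightarrow> real" where
  "Wp d c n ws a b = (\<Prod>k<n. wv d c (ws ! k) (a ! k, b ! k))"

definition Sw :: "nat \<Rightarrow> real \<Rightarrow> nat \<Rightarrow> (nat list \<Rightarrow> nat list \<Rightarrow> complex) \<Rightarrow> (nat \<times> nat) list \<Rightarrow> complex" where
  "Sw d c n \<phi> ws = (\<Sum>a\<in>idx d n. \<Sum>b\<in>idx d n. complex_of_real (Wp d c n ws a b) * \<phi> a b)"

lemma tpow_gram:
  assumes d: "d \<ge> 2" and c: "0 \<le> c" "c \<le> 1 / (real d * (real d - 1))"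
  shows "tpow n (ptrans (rho d c 0)) a b a' b' =
    (\<Sum>ws\<in>lsts ({..<d}\<times>{..<d}) n. complex_of_real (Wp d c n ws a b) * complex_of_real (Wp d c n ws a' b'))"
proof -
  have "tpow n (ptrans (rho d c 0)) a b a' b' = (\<Prod>k<n. \<Sum>r\<in>{..<d}\<times>{..<d}.
      complex_of_real (wv d c r (a ! k, b ! k)) * complex_of_real (wv d c r (a' ! k, b' ! k)))"
    unfolding tpow_def ptrans_rho gram[OF assms] by simp
  also have "\<dots> = (\<Sum>ws\<in>lsts ({..<d}\<times>{..<d}) n. \<Prod>k<n.
      complex_of_real (wv d c (ws ! k) (a ! k, b ! k)) * complex_of_real (wv d c (ws ! k) (a' ! k, b' ! k)))"
    by (rule prod_sum_lsts) simp
  also have "\<dots> = (\<Sum>ws\<in>lsts ({..<d}\<times>{..<d}) n. complex_of_real (Wp d c n ws a b) * complex_of_real (Wp d c n ws a' b'))"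
    unfolding Wp_def by (simp add: prod.distrib)
  finally show ?thesis .
qed

lemma expval_gram:
  assumes d: "d \<ge> 2" and c: "0 \<le> c" "c \<le> 1 / (real d * (real d - 1))"
  shows "expval d n (ptrans (rho d c 0)) \<phi> =
    (\<Sum>ws\<in>lsts ({..<d}\<times>{..<d}) n. complex_of_real ((cmod (Sw d c n \<phi> ws))\<^sup>2))"
proof -
  have "expval d n (ptrans (rho d c 0)) \<phi> = (\<Sum>ws\<in>lsts ({..<d}\<times>{..<d}) n.
     (\<Sum>a\<in>idx d n. \<Sum>b\<in>idx d n. cnj (\<phi> a b) * complex_of_real (Wp d c n ws a b)) *
     (\<Sum>a'\<in>idx d n. \<Sum>b'\<in>idx d n. complex_of_real (Wp d c n ws a' b') * \<phi> a' b'))"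
    unfolding expval_def tpow_gram[OF assms] by (rule sum4_factor)
  also have "\<dots> = (\<Sum>ws\<in>lsts ({..<d}\<times>{..<d}) n. cnj (Sw d c n \<phi> ws) * Sw d c n \<phi> ws)"
    unfolding Sw_def by (simp add: mult.commute)
  also have "\<dots> = (\<Sum>ws\<in>lsts ({..<d}\<times>{..<d}) n. complex_of_real ((cmod (Sw d c n \<phi> ws))\<^sup>2))"
    by (intro sum.cong refl) (simp only: complex_norm_square mult.commute)
  finally show ?thesis .
qed

lemma det3:
  fixes x0 x1 x2 z0 z1 z2 y0 y1 y2 w0 w1 w2 :: complex
  assumes "x0*y1 + z0*w1 = 0" "x0*y2 + z0*w2 = 0" "x1*y0 + z1*w0 = 0"
          "x1*y2 + z1*w2 = 0" "x2*y0 + z2*w0 = 0" "x2*y1 + z2*w1 = 0"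
  shows "(x0*y0 + z0*w0) * (x1*y1 + z1*w1) * (x2*y2 + z2*w2) = 0"
proof -
  let ?N = "\<lambda>x z y w. x*y + z*w"
  have det0: "?N x0 z0 y0 w0 * (?N x1 z1 y1 w1 * ?N x2 z2 y2 w2 - ?N x1 z1 y2 w2 * ?N x2 z2 y1 w1)
            - ?N x0 z0 y1 w1 * (?N x1 z1 y0 w0 * ?N x2 z2 y2 w2 - ?N x1 z1 y2 w2 * ?N x2 z2 y0 w0)
            + ?N x0 z0 y2 w2 * (?N x1 z1 y0 w0 * ?N x2 z2 y1 w1 - ?N x1 z1 y1 w1 * ?N x2 z2 y0 w0) = 0"
    by (simp add: algebra_simps)
  then show ?thesis unfolding assms by (simp add: mult.assoc)
qed

lemma Wp_Cons: "Wp d c (Suc n) (r # ws) (i # a) (j # b) = wv d c r (i, j) * Wp d c n ws a b"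
  unfolding Wp_def by (simp only: prod.lessThan_Suc_shift nth_Cons_0 nth_Cons_Suc)

lemma Sw_Suc: "Sw d c (Suc n) \<phi> (r # ws) =
   (\<Sum>i<d. \<Sum>j<d. complex_of_real (wv d c r (i, j)) * Sw d c n (\<lambda>a b. \<phi> (i # a) (j # b)) ws)"
proof -
  have "Sw d c (Suc n) \<phi> (r # ws) = (\<Sum>i<d. \<Sum>a\<in>idx d n. \<Sum>j<d. \<Sum>b\<in>idx d n.
      complex_of_real (wv d c r (i, j)) * (complex_of_real (Wp d c n ws a b) * \<phi> (i # a) (j # b)))"
    unfolding Sw_def sum_idx_Suc Wp_Cons by (simp add: mult.assoc)
  also have "\<dots> = (\<Sum>i<d. \<Sum>j<d. \<Sum>a\<in>idx d n. \<Sum>b\<in>idx d n.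
      complex_of_real (wv d c r (i, j)) * (complex_of_real (Wp d c n ws a b) * \<phi> (i # a) (j # b)))"
    by (intro sum.cong refl) (rule sum.swap)
  also have "\<dots> = (\<Sum>i<d. \<Sum>j<d. complex_of_real (wv d c r (i, j)) * Sw d c n (\<lambda>a b. \<phi> (i # a) (j # b)) ws)"
    unfolding Sw_def by (simp add: sum_distrib_left)
  finally show ?thesis .
qed

lemma Sw_cong: "(\<And>a b. a \<in> idx d n \<Longrightarrow> b \<in> idx d n \<Longrightarrow> \<phi> a b = \<phi>' a b) \<Longrightarrow> Sw d c n \<phi> ws = Sw d c n \<phi>' ws"
  unfolding Sw_def by (intro sum.cong refl) auto

lemma Sw_zero: "(\<And>a b. a \<in> idx d n \<Longrightarrow> b \<in> idx d n \<Longrightarrow> \<phi> a b = 0) \<Longrightarrow> Sw d c n \<phi> ws = 0"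
  unfolding Sw_def by (intro sum.neutral ballI) auto

lemma wv_off: "i \<noteq> j \<Longrightarrow> wv d c (i, j) (p, q) = (if p = i \<and> q = j then sqrt (mu d c 0) else 0)"
  by (simp add: wv_def)

lemma wv_diag: "wv d c (i, i) (p, q) = (if p = q \<and> p < d then sqrt (lam d c) * ((if p = i then 1 else 0) - 1 / real d) else 0)"
  by (simp add: wv_def)

lemma sum_off: "i < d \<Longrightarrow> j < d \<Longrightarrow> i \<noteq> j \<Longrightarrow>
  (\<Sum>p<d. \<Sum>q<d. complex_of_real (wv d c (i, j) (p, q)) * T p q) = complex_of_real (sqrt (mu d c 0)) * T i j"
proof -
  assume a: "i < d" "j < d" "i \<noteq> j"
  have e: "\<And>p q. complex_of_real (wv d c (i, j) (p, q)) * T p q = (if p = i then (if q = j then complex_of_real (sqrt (mu d c 0)) * T i j else 0) else 0)"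
    using a by (simp add: wv_off)
  have e2: "\<And>p. (\<Sum>q<d. if p = i then (if q = j then complex_of_real (sqrt (mu d c 0)) * T i j else 0) else 0)
     = (if p = i then complex_of_real (sqrt (mu d c 0)) * T i j else 0)"
    subgoal for p using a by (cases "p = i") simp_all
    done
  show ?thesis unfolding e e2 using a by simp
qed

lemma sum_diag: "i < d \<Longrightarrow>
  (\<Sum>p<d. \<Sum>q<d. complex_of_real (wv d c (i, i) (p, q)) * T p q) =
    complex_of_real (sqrt (lam d c)) * (T i i - (\<Sum>p<d. T p p) / of_nat d)"
proof -
  assume a: "i < d"
  have "(\<Sum>p<d. \<Sum>q<d. complex_of_real (wv d c (i, i) (p, q)) * T p q) =
     (\<Sum>p<d. complex_of_real (sqrt (lam d c)) * ((if p = i then T p p else 0) - T p p / of_nat d))"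
  proof (intro sum.cong refl)
    fix p assume p: "p \<in> {..<d}"
    have "(\<Sum>q<d. complex_of_real (wv d c (i, i) (p, q)) * T p q) =
       (\<Sum>q<d. if q = p then complex_of_real (sqrt (lam d c) * ((if p = i then 1 else 0) - 1 / real d)) * T p p else 0)"
      using p by (intro sum.cong refl) (auto simp: wv_diag)
    also have "\<dots> = complex_of_real (sqrt (lam d c)) * ((if p = i then T p p else 0) - T p p / of_nat d)"
      using p by (simp add: sum.delta algebra_simps)
    finally show "(\<Sum>q<d. complex_of_real (wv d c (i, i) (p, q)) * T p q) = complex_of_real (sqrt (lam d c)) * ((if p = i then T p p else 0) - T p p / of_nat d)" .
  qed
  also have "\<dots> = complex_of_real (sqrt (lam d c)) * (T i i - (\<Sum>p<d. T p p) / of_nat d)"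
    using a by (simp add: sum_distrib_left[symmetric] sum_subtractf sum_divide_distrib[symmetric] sum.delta')
  finally show ?thesis .
qed

lemma kernel:
  assumes d3: "d \<ge> 3" and mu0: "mu d c 0 > 0" and lam0: "lam d c > 0"
  shows "(\<forall>ws\<in>lsts ({..<d}\<times>{..<d}) n. Sw d c n (\<lambda>a b. u0 a * v0 b + u1 a * v1 b) ws = 0) \<Longrightarrow>
     a \<in> idx d n \<Longrightarrow> b \<in> idx d n \<Longrightarrow> u0 a * v0 b + u1 a * v1 b = 0"
proof (induction n arbitrary: u0 u1 v0 v1 a b)
  case 0
  then have ab: "a = []" "b = []" by auto
  have "Sw d c 0 (\<lambda>a b. u0 a * v0 b + u1 a * v1 b) [] = 0" using 0 by simp
  then show ?case unfolding Sw_def Wp_def ab by simp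
next
  case (Suc n)
  let ?R = "{..<d}\<times>{..<d}"
  define \<phi> where "\<phi> = (\<lambda>a b. u0 a * v0 b + u1 a * v1 b)"
  define T where "T = (\<lambda>i j ws. Sw d c n (\<lambda>a b. \<phi> (i # a) (j # b)) ws)"
  have ann: "(\<Sum>i<d. \<Sum>j<d. complex_of_real (wv d c r (i, j)) * T i j ws) = 0"
    if r: "r \<in> ?R" and ws: "ws \<in> lsts ?R n" for r ws
  proof -
    have "r # ws \<in> lsts ?R (Suc n)" using r ws by (auto simp: lsts_def)
    then have "Sw d c (Suc n) \<phi> (r # ws) = 0" using Suc.prems(1) unfolding \<phi>_def by blast
    then show ?thesis unfolding Sw_Suc T_def .
  qed
  have sqmu: "complex_of_real (sqrt (mu d c 0)) \<noteq> 0" using mu0 by simp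
  have sqlam: "complex_of_real (sqrt (lam d c)) \<noteq> 0" using lam0 by simp
  have offT: "T i j ws = 0" if "i < d" "j < d" "i \<noteq> j" "ws \<in> lsts ?R n" for i j ws
    using ann[of "(i,j)" ws] that sum_off[of i d j c "\<lambda>p q. T p q ws"] sqmu by simp
  have offz: "\<phi> (i # a) (j # b) = 0" if "i < d" "j < d" "i \<noteq> j" "a \<in> idx d n" "b \<in> idx d n" for i j a b
  proof -
    have "\<forall>ws\<in>lsts ?R n. Sw d c n (\<lambda>a b. u0 (i # a) * v0 (j # b) + u1 (i # a) * v1 (j # b)) ws = 0"
      using offT[OF that(1-3)] unfolding T_def \<phi>_def by blast
    from Suc.IH[OF this that(4,5)] show ?thesis unfolding \<phi>_def .
  qed
  have diagT: "T i i ws = (\<Sum>p<d. T p p ws) / of_nat d" if "i < d" "ws \<in> lsts ?R n" for i ws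
    using ann[of "(i,i)" ws] that sum_diag[of i d c "\<lambda>p q. T p q ws"] sqlam by simp
  have ex0: "\<exists>i0<d. \<forall>a\<in>idx d n. \<forall>b\<in>idx d n. \<phi> (i0 # a) (i0 # b) = 0"
  proof (rule ccontr)
    assume "\<not> ?thesis"
    then have nz: "\<forall>i<d. \<exists>a\<in>idx d n. \<exists>b\<in>idx d n. \<phi> (i # a) (i # b) \<noteq> 0" by blast
    obtain a0 b0 where ab0: "a0 \<in> idx d n" "b0 \<in> idx d n" "\<phi> (0 # a0) (0 # b0) \<noteq> 0" using nz[rule_format, of 0] d3 by auto
    obtain a1 b1 where ab1: "a1 \<in> idx d n" "b1 \<in> idx d n" "\<phi> (1 # a1) (1 # b1) \<noteq> 0" using nz[rule_format, of 1] d3 by auto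
    obtain a2 b2 where ab2: "a2 \<in> idx d n" "b2 \<in> idx d n" "\<phi> (2 # a2) (2 # b2) \<noteq> 0" using nz[rule_format, of 2] d3 by auto
    have z: "\<phi> (0 # a0) (1 # b1) = 0" "\<phi> (0 # a0) (2 # b2) = 0" "\<phi> (1 # a1) (0 # b0) = 0"
      "\<phi> (1 # a1) (2 # b2) = 0" "\<phi> (2 # a2) (0 # b0) = 0" "\<phi> (2 # a2) (1 # b1) = 0"
      using offz ab0 ab1 ab2 d3 by auto
    have "\<phi> (0 # a0) (0 # b0) * \<phi> (1 # a1) (1 # b1) * \<phi> (2 # a2) (2 # b2) = 0"
      using z unfolding \<phi>_def by (rule det3)
    then show False using ab0 ab1 ab2 by simp
  qed
  then obtain i0 where i0: "i0 < d" "\<And>a b. a \<in> idx d n \<Longrightarrow> b \<in> idx d n \<Longrightarrow> \<phi> (i0 # a) (i0 # b) = 0" by blast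
  have T0: "T i0 i0 ws = 0" for ws unfolding T_def by (rule Sw_zero) (rule i0(2))
  have diagz: "\<phi> (i # a) (i # b) = 0" if "i < d" "a \<in> idx d n" "b \<in> idx d n" for i a b
  proof -
    have "T i i ws = 0" if "ws \<in> lsts ?R n" for ws
      using diagT[OF \<open>i < d\<close> that] diagT[OF i0(1) that] T0[of ws] by simp
    then have "\<forall>ws\<in>lsts ?R n. Sw d c n (\<lambda>a b. u0 (i # a) * v0 (i # b) + u1 (i # a) * v1 (i # b)) ws = 0"
      unfolding T_def \<phi>_def by blast
    from Suc.IH[OF this that(2,3)] show ?thesis unfolding \<phi>_def .
  qed
  from Suc.prems(2) obtain i a' where a: "a = i # a'" "i < d" "a' \<in> idx d n" by (rule idx_SucE)
  from Suc.prems(3) obtain j b' where b: "b = j # b'" "j < d" "b' \<in> idx d n" by (rule idx_SucE)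
  show ?case
  proof (cases "i = j")
    case True
    then show ?thesis using diagz[OF a(2) a(3) b(3)] a b unfolding \<phi>_def by simp
  next
    case False
    then show ?thesis using offz[OF a(2) b(2) False a(3) b(3)] a b unfolding \<phi>_def by simp
  qed
qed

lemma Xr_sym: "Xr d c e x y = Xr d c e y x"
  by (cases x; cases y) (auto simp: Xr_def)

lemma tpow_real: "tpow n (ptrans (rho d c e)) a b a' b' = complex_of_real (\<Prod>k<n. Xr d c e (a ! k, b ! k) (a' ! k, b' ! k))"
  unfolding tpow_def ptrans_rho by simp

lemma swap_pairs:
  "(\<Sum>a\<in>A. \<Sum>b\<in>B. \<Sum>a'\<in>A. \<Sum>b'\<in>B. F a b a' b') = (\<Sum>a\<in>A. \<Sum>b\<in>B. \<Sum>a'\<in>A. \<Sum>b'\<in>B. F a' b' a b)"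
proof -
  have inner: "\<And>G. (\<Sum>a\<in>A. \<Sum>b\<in>B. G a b) = (\<Sum>(a,b)\<in>A\<times>B. G a b)"
    by (rule sum.cartesian_product)
  have "(\<Sum>a\<in>A. \<Sum>b\<in>B. \<Sum>a'\<in>A. \<Sum>b'\<in>B. F a b a' b') = (\<Sum>(a,b)\<in>A\<times>B. \<Sum>(a',b')\<in>A\<times>B. F a b a' b')"
    by (simp only: inner[of "\<lambda>a' b'. F _ _ a' b'"] inner[of "\<lambda>a b. \<Sum>(a',b')\<in>A\<times>B. F a b a' b'"])
  also have "\<dots> = (\<Sum>p\<in>A\<times>B. \<Sum>q\<in>A\<times>B. F (fst p) (snd p) (fst q) (snd q))"
    by (simp add: split_def)
  also have "\<dots> = (\<Sum>q\<in>A\<times>B. \<Sum>p\<in>A\<times>B. F (fst p) (snd p) (fst q) (snd q))"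
    by (rule sum.swap)
  also have "\<dots> = (\<Sum>(a',b')\<in>A\<times>B. \<Sum>(a,b)\<in>A\<times>B. F a b a' b')"
    by (simp add: split_def)
  also have "\<dots> = (\<Sum>a\<in>A. \<Sum>b\<in>B. \<Sum>a'\<in>A. \<Sum>b'\<in>B. F a' b' a b)"
    by (simp only: inner[of "\<lambda>a' b'. F a' b' _ _"] inner[of "\<lambda>a b. \<Sum>(a',b')\<in>A\<times>B. F a' b' a b"])
  finally show ?thesis .
qed

lemma expval_cnj: "cnj (expval d n (ptrans (rho d c e)) \<phi>) = expval d n (ptrans (rho d c e)) \<phi>"
proof -
  let ?t = "\<lambda>a b a' b'. (\<Prod>k<n. Xr d c e (a ! k, b ! k) (a' ! k, b' ! k))"
  have sym: "?t a b a' b' = ?t a' b' a b" for a b a' b' by (simp add: Xr_sym)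
  have "cnj (expval d n (ptrans (rho d c e)) \<phi>) = (\<Sum>a\<in>idx d n. \<Sum>b\<in>idx d n. \<Sum>a'\<in>idx d n. \<Sum>b'\<in>idx d n.
      \<phi> a b * complex_of_real (?t a b a' b') * cnj (\<phi> a' b'))"
    unfolding expval_def tpow_real by simp
  also have "\<dots> = (\<Sum>a\<in>idx d n. \<Sum>b\<in>idx d n. \<Sum>a'\<in>idx d n. \<Sum>b'\<in>idx d n.
      \<phi> a' b' * complex_of_real (?t a' b' a b) * cnj (\<phi> a b))"
    by (rule swap_pairs)
  also have "\<dots> = expval d n (ptrans (rho d c e)) \<phi>"
    unfolding expval_def tpow_real by (intro sum.cong refl) (simp add: sym mult_ac)
  finally show ?thesis .
qed

lemma expval_Im: "Im (expval d n (ptrans (rho d c e)) \<phi>) = 0"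
  using expval_cnj[of d n c e \<phi>] by (metis Reals_cnj_iff complex_is_Real_iff)

lemma prod_diff_bound:
  fixes x y :: "nat \<Rightarrow> real"
  assumes "B \<ge> 0" "\<And>k. k < n \<Longrightarrow> \<bar>x k\<bar> \<le> B" "\<And>k. k < n \<Longrightarrow> \<bar>y k\<bar> \<le> B" "\<And>k. k < n \<Longrightarrow> \<bar>x k - y k\<bar> \<le> \<delta>"
  shows "\<bar>(\<Prod>k<n. x k) - (\<Prod>k<n. y k)\<bar> \<le> real n * B ^ (n - 1) * \<delta>"
  using assms(2-4)
proof (induction n)
  case 0
  then show ?case by simp
next
  case (Suc n)
  have d0: "\<delta> \<ge> 0" using Suc.prems(3)[of 0] by simp
  have IH: "\<bar>(\<Prod>k<n. x k) - (\<Prod>k<n. y k)\<bar> \<le> real n * B ^ (n - 1) * \<delta>" using Suc by simp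
  have "(\<Prod>k<n. \<bar>x k\<bar>) \<le> (\<Prod>k<n. B)" by (rule prod_mono) (use Suc.prems in auto)
  then have Px: "\<bar>\<Prod>k<n. x k\<bar> \<le> B ^ n" by (simp add: abs_prod)
  have "\<bar>(\<Prod>k<Suc n. x k) - (\<Prod>k<Suc n. y k)\<bar> = \<bar>(\<Prod>k<n. x k) * (x n - y n) + ((\<Prod>k<n. x k) - (\<Prod>k<n. y k)) * y n\<bar>"
    by (simp add: algebra_simps)
  also have "\<dots> \<le> \<bar>\<Prod>k<n. x k\<bar> * \<bar>x n - y n\<bar> + \<bar>(\<Prod>k<n. x k) - (\<Prod>k<n. y k)\<bar> * \<bar>y n\<bar>"
    by (metis abs_mult abs_triangle_ineq)
  also have "\<dots> \<le> B ^ n * \<delta> + (real n * B ^ (n - 1) * \<delta>) * B"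
    by (intro add_mono mult_mono Px IH Suc.prems) (use assms(1) d0 in auto)
  also have "\<dots> = real (Suc n) * B ^ (Suc n - 1) * \<delta>"
    by (cases n) (simp_all add: algebra_simps)
  finally show ?case .
qed

lemma Xr_sel: "\<exists>k::nat. k < 4 \<and> (\<forall>e. Xr d c e x y = [aa d c e, mu d c e, nu d c e, 0] ! k)"
proof -
  obtain i1 j1 i2 j2 where xy: "x = (i1, j1)" "y = (i2, j2)" by (cases x, cases y) auto
  define C0 where "C0 = (i1 < d \<and> j1 < d \<and> i2 < d \<and> j2 < d)"
  define C1 where "C1 = (i1 = j1 \<and> i2 = j2 \<and> i1 = i2)"
  define C2 where "C2 = (i1 = i2 \<and> j1 = j2)"
  define C3 where "C3 = (i1 = j1 \<and> i2 = j2)"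
  have X: "\<And>e. Xr d c e x y = (if C0 then (if C1 then aa d c e else if C2 then mu d c e else if C3 then nu d c e else 0) else 0)"
    unfolding xy Xr_def C0_def C1_def C2_def C3_def by simp
  show ?thesis
  proof (cases C0)
    case False then show ?thesis unfolding X by (intro exI[of _ 3]) simp
  next
    case T0: True
    show ?thesis
    proof (cases C1)
      case True then show ?thesis using T0 unfolding X by (intro exI[of _ 0]) simp
    next
      case F1: False
      show ?thesis
      proof (cases C2)
        case True then show ?thesis using T0 F1 unfolding X by (intro exI[of _ 1]) simp
      next
        case F2: False
        show ?thesis
        proof (cases C3)
          case True then show ?thesis using T0 F1 F2 unfolding X by (intro exI[of _ 2]) simp
        next
          case False then show ?thesis using T0 F1 F2 unfolding X by (intro exI[of _ 3]) simp
        qed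
      qed
    qed
  qed
qed

lemma less4_cases: "(k::nat) < 4 \<Longrightarrow> k = 0 \<or> k = 1 \<or> k = 2 \<or> k = 3" by auto

definition Bc :: "nat \<Rightarrow> real \<Rightarrow> real" where
  "Bc d c = \<bar>aa d c 0\<bar> + \<bar>mu d c 0\<bar> + \<bar>nu d c 0\<bar> + real d"

lemma Bc_nonneg: "Bc d c \<ge> 0" by (simp add: Bc_def)

lemma Xr_bound: assumes "d \<ge> 1" "0 \<le> e" "e \<le> 1" shows "\<bar>Xr d c e x y\<bar> \<le> Bc d c"
proof -
  have a: "\<bar>aa d c e\<bar> \<le> \<bar>aa d c 0\<bar> + real d"
  proof -
    have "aa d c e = aa d c 0 - (real d - 1) / 2 * e" by (simp add: aa_def field_simps)
    moreover have "\<bar>(real d - 1) / 2 * e\<bar> \<le> real d"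
    proof -
      have "\<bar>(real d - 1) / 2 * e\<bar> = (real d - 1) / 2 * e" using assms by simp
      also have "\<dots> \<le> (real d - 1) / 2 * 1" using assms by (intro mult_left_mono) auto
      finally show ?thesis by simp
    qed
    ultimately show ?thesis by linarith
  qed
  have m: "\<bar>mu d c e\<bar> \<le> \<bar>mu d c 0\<bar> + real d"
  proof -
    have gen: "\<And>x::real. (x + e + c) / 2 = (x + 0 + c) / 2 + e / 2" by (simp add: field_simps)
    have "mu d c e = mu d c 0 + e / 2" unfolding mu_def by (rule gen)
    then show ?thesis using assms by simp
  qed
  have n: "\<bar>nu d c e\<bar> \<le> \<bar>nu d c 0\<bar> + real d"
  proof -
    have gen: "\<And>x::real. (c - (x + e)) / 2 = (c - (x + 0)) / 2 - e / 2" by (simp add: field_simps)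
    have "nu d c e = nu d c 0 - e / 2" unfolding nu_def by (rule gen)
    then show ?thesis using assms by simp
  qed
  obtain k where k: "k < 4" "\<And>e. Xr d c e x y = [aa d c e, mu d c e, nu d c e, 0] ! k" using Xr_sel by blast
  have B: "\<bar>aa d c 0\<bar> + real d \<le> Bc d c" "\<bar>mu d c 0\<bar> + real d \<le> Bc d c" "\<bar>nu d c 0\<bar> + real d \<le> Bc d c" "0 \<le> Bc d c"
    by (auto simp: Bc_def)
  show ?thesis
    using less4_cases[OF k(1)] a m n B unfolding k(2) by auto
qed

lemma Xr_diff: assumes "d \<ge> 1" "0 \<le> e" shows "\<bar>Xr d c e x y - Xr d c 0 x y\<bar> \<le> real d * e"
proof -
  have a: "\<bar>aa d c e - aa d c 0\<bar> \<le> real d * e"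
  proof -
    have "aa d c e - aa d c 0 = - ((real d - 1) / 2 * e)" by (simp add: aa_def field_simps)
    moreover have "\<bar>(real d - 1) / 2 * e\<bar> = (real d - 1) / 2 * e" using assms by simp
    moreover have "(real d - 1) / 2 * e \<le> real d * e" using assms by (intro mult_right_mono) auto
    ultimately show ?thesis by simp
  qed
  have m: "\<bar>mu d c e - mu d c 0\<bar> \<le> real d * e"
  proof -
    have gen: "\<And>x::real. (x + e + c) / 2 - (x + 0 + c) / 2 = e / 2" by (simp add: field_simps)
    have "mu d c e - mu d c 0 = e / 2" unfolding mu_def by (rule gen)
    moreover have "e / 2 \<le> real d * e"
    proof -
      have "1 * e \<le> real d * e" by (rule mult_right_mono) (use assms in auto)
      then show ?thesis using assms by simp
    qed
    ultimately show ?thesis using assms by simp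
  qed
  have n: "\<bar>nu d c e - nu d c 0\<bar> \<le> real d * e"
  proof -
    have gen: "\<And>x::real. (c - (x + e)) / 2 - (c - (x + 0)) / 2 = - (e / 2)" by (simp add: field_simps)
    have "nu d c e - nu d c 0 = - (e / 2)" unfolding nu_def by (rule gen)
    moreover have "e / 2 \<le> real d * e"
    proof -
      have "1 * e \<le> real d * e" by (rule mult_right_mono) (use assms in auto)
      then show ?thesis using assms by simp
    qed
    ultimately show ?thesis using assms by simp
  qed
  have z: "0 \<le> real d * e" using assms by simp
  obtain k where k: "k < 4" "\<And>e. Xr d c e x y = [aa d c e, mu d c e, nu d c e, 0] ! k" using Xr_sel by blast
  show ?thesis
    using less4_cases[OF k(1)] a m n z unfolding k(2) by auto
qed

lemma norm_sum4:
  assumes "\<And>a b a' b'. a \<in> A \<Longrightarrow> b \<in> B \<Longrightarrow> a' \<in> A \<Longrightarrow> b' \<in> B \<Longrightarrow> norm (F a b a' b' :: complex) \<le> K"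
  shows "norm (\<Sum>a\<in>A. \<Sum>b\<in>B. \<Sum>a'\<in>A. \<Sum>b'\<in>B. F a b a' b') \<le> real (card A) * (real (card B) * (real (card A) * (real (card B) * K)))"
proof -
  have "norm (\<Sum>a\<in>A. \<Sum>b\<in>B. \<Sum>a'\<in>A. \<Sum>b'\<in>B. F a b a' b') \<le> (\<Sum>a\<in>A. \<Sum>b\<in>B. \<Sum>a'\<in>A. \<Sum>b'\<in>B. K)"
    by (intro sum_norm_le) (use assms in auto)
  then show ?thesis by simp
qed

lemma expval_diff:
  assumes d: "d \<ge> 1" and e: "0 \<le> e" "e \<le> 1" and \<phi>: "\<And>a b. a \<in> idx d n \<Longrightarrow> b \<in> idx d n \<Longrightarrow> cmod (\<phi> a b) \<le> 1"
  shows "cmod (expval d n (ptrans (rho d c e)) \<phi> - expval d n (ptrans (rho d c 0)) \<phi>)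
    \<le> real (card (idx d n)) ^ 4 * (real n * Bc d c ^ (n - 1) * (real d * e))"
proof -
  let ?t = "\<lambda>e a b a' b'. (\<Prod>k<n. Xr d c e (a ! k, b ! k) (a' ! k, b' ! k))"
  let ?D = "real n * Bc d c ^ (n - 1) * (real d * e)"
  have "expval d n (ptrans (rho d c e)) \<phi> - expval d n (ptrans (rho d c 0)) \<phi> =
    (\<Sum>a\<in>idx d n. \<Sum>b\<in>idx d n. \<Sum>a'\<in>idx d n. \<Sum>b'\<in>idx d n.
      cnj (\<phi> a b) * complex_of_real (?t e a b a' b' - ?t 0 a b a' b') * \<phi> a' b')"
    unfolding expval_def tpow_real
    by (simp only: sum_subtractf[symmetric]) (intro sum.cong refl, simp only: of_real_diff right_diff_distrib left_diff_distrib)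
  also have "cmod \<dots> \<le> real (card (idx d n)) * (real (card (idx d n)) * (real (card (idx d n)) * (real (card (idx d n)) * ?D)))"
  proof (rule norm_sum4)
    fix a b a' b' assume ab: "a \<in> idx d n" "b \<in> idx d n" "a' \<in> idx d n" "b' \<in> idx d n"
    have td: "\<bar>?t e a b a' b' - ?t 0 a b a' b'\<bar> \<le> ?D"
      by (rule prod_diff_bound[OF Bc_nonneg]) (use Xr_bound[OF d e] Xr_bound[OF d order_refl zero_le_one] Xr_diff[OF d e(1)] in auto)
    have "cmod (cnj (\<phi> a b) * complex_of_real (?t e a b a' b' - ?t 0 a b a' b') * \<phi> a' b')
       = cmod (\<phi> a b) * \<bar>?t e a b a' b' - ?t 0 a b a' b'\<bar> * cmod (\<phi> a' b')"
      by (simp only: norm_mult complex_mod_cnj norm_of_real)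
    also have "\<dots> \<le> 1 * ?D * 1"
      proof -
      have D0: "0 \<le> ?D" using Bc_nonneg e by simp
      show ?thesis by (intro mult_mono td \<phi> ab) (use D0 in auto)
    qed
    finally show "cmod (cnj (\<phi> a b) * complex_of_real (?t e a b a' b' - ?t 0 a b a' b') * \<phi> a' b') \<le> ?D" by simp
  qed
  also have "\<dots> = real (card (idx d n)) ^ 4 * ?D" by (simp only: power4_eq_xxxx mult.assoc)
  finally show ?thesis .
qed

lemma sr_rep:
  assumes "schmidt_rank d n \<psi> = 2"
  shows "\<exists>u0 u1 v0 v1. \<forall>a\<in>idx d n. \<forall>b\<in>idx d n. \<psi> a b = u0 a * v0 b + u1 a * v1 b"
    and "\<exists>a\<in>idx d n. \<exists>b\<in>idx d n. \<psi> a b \<noteq> 0"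
proof -
  define P where "P = (\<lambda>r. \<exists>u v :: nat \<Rightarrow> nat list \<Rightarrow> complex.
      \<forall>a\<in>idx d n. \<forall>b\<in>idx d n. \<psi> a b = (\<Sum>k<r. u k a * v k b))"
  have sr: "schmidt_rank d n \<psi> = (LEAST r. P r)" unfolding schmidt_rank_def P_def ..
  obtain h where h: "bij_betw h {0..<card (idx d n)} (idx d n)"
    using ex_bij_betw_nat_finite[OF finite_idx] by blast
  have "P (card (idx d n))"
    unfolding P_def
  proof (intro exI ballI)
    fix a b assume a: "a \<in> idx d n" and b: "b \<in> idx d n"
    have "(\<Sum>k<card (idx d n). (if a = h k then 1 else 0) * \<psi> (h k) b)
        = (\<Sum>k\<in>{0..<card (idx d n)}. (\<lambda>x. if a = x then \<psi> x b else 0) (h k))"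
      by (intro sum.cong) auto
    also have "\<dots> = (\<Sum>x\<in>idx d n. if a = x then \<psi> x b else 0)"
      by (rule sum.reindex_bij_betw[OF h])
    also have "\<dots> = \<psi> a b" using a finite_idx by simp
    finally show "\<psi> a b = (\<Sum>k<card (idx d n). (\<lambda>k a. if a = h k then 1 else 0) k a * (\<lambda>k b. \<psi> (h k) b) k b)"
      by simp
  qed
  then have "P (LEAST r. P r)" by (rule LeastI)
  then have "P 2" using assms sr by simp
  then show "\<exists>u0 u1 v0 v1. \<forall>a\<in>idx d n. \<forall>b\<in>idx d n. \<psi> a b = u0 a * v0 b + u1 a * v1 b"
    unfolding P_def by (auto simp: numeral_2_eq_2)
  show "\<exists>a\<in>idx d n. \<exists>b\<in>idx d n. \<psi> a b \<noteq> 0"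
  proof (rule ccontr)
    assume "\<not> ?thesis"
    then have "P 0" unfolding P_def by auto
    then have "(LEAST r. P r) \<le> 0" by (rule Least_le)
    then show False using assms sr by simp
  qed
qed


definition ip :: "nat \<Rightarrow> nat \<Rightarrow> (nat list \<Rightarrow> complex) \<Rightarrow> (nat list \<Rightarrow> complex) \<Rightarrow> complex" where
  "ip d n f g = (\<Sum>a\<in>idx d n. cnj (f a) * g a)"

definition nsq :: "nat \<Rightarrow> nat \<Rightarrow> (nat list \<Rightarrow> complex) \<Rightarrow> real" where
  "nsq d n f = (\<Sum>a\<in>idx d n. (cmod (f a))\<^sup>2)"

lemma ip_self: "ip d n f f = complex_of_real (nsq d n f)"
  unfolding ip_def nsq_def of_real_sum by (intro sum.cong refl) (simp only: complex_norm_square mult.commute)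

lemma nsq_nonneg: "nsq d n f \<ge> 0"
  unfolding nsq_def by (intro sum_nonneg) simp

lemma nsq_zero_iff: "nsq d n f = 0 \<longleftrightarrow> (\<forall>a\<in>idx d n. f a = 0)"
  unfolding nsq_def using finite_idx by (subst sum_nonneg_eq_0_iff) auto

lemma nsq_scale: "nsq d n (\<lambda>a. x * f a) = (cmod x)\<^sup>2 * nsq d n f"
  unfolding nsq_def by (simp add: norm_mult power_mult_distrib sum_distrib_left)

lemma ip_cnj: "ip d n g f = cnj (ip d n f g)"
  unfolding ip_def by (simp add: mult.commute)

lemma ip_lin: "ip d n f (\<lambda>a. g a * x + h a * y) = ip d n f g * x + ip d n f h * y"
  unfolding ip_def by (simp add: sum.distrib sum_distrib_right sum_distrib_left algebra_simps)

lemma ip_scale_r: "ip d n f (\<lambda>a. x * g a) = x * ip d n f g"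
  unfolding ip_def by (simp add: sum_distrib_left algebra_simps)

lemma ip_scale_l: "ip d n (\<lambda>a. x * f a) g = cnj x * ip d n f g"
  unfolding ip_def by (simp add: sum_distrib_left algebra_simps)

lemma ip_diff_r: "ip d n f (\<lambda>a. g a - h a) = ip d n f g - ip d n f h"
  unfolding ip_def by (simp add: sum_subtractf algebra_simps)

lemma ip_cong: "(\<And>a. a \<in> idx d n \<Longrightarrow> g a = g' a) \<Longrightarrow> ip d n f g = ip d n f g'"
  unfolding ip_def by (intro sum.cong) auto

lemma coord_le: "a \<in> idx d n \<Longrightarrow> (cmod (f a))\<^sup>2 \<le> nsq d n f"
  unfolding nsq_def by (rule member_le_sum) (auto simp: finite_idx)

lemma coord_le1: "a \<in> idx d n \<Longrightarrow> nsq d n f = 1 \<Longrightarrow> cmod (f a) \<le> 1"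
  using coord_le[of a d n f] by (simp add: power_le_one_iff abs_le_square_iff[symmetric])

lemma ip_bound: "(\<And>a. a \<in> idx d n \<Longrightarrow> cmod (f a) \<le> 1) \<Longrightarrow> (\<And>a. a \<in> idx d n \<Longrightarrow> cmod (g a) \<le> 1)
   \<Longrightarrow> cmod (ip d n f g) \<le> real (card (idx d n))"
proof -
  assume f: "\<And>a. a \<in> idx d n \<Longrightarrow> cmod (f a) \<le> 1" and g: "\<And>a. a \<in> idx d n \<Longrightarrow> cmod (g a) \<le> 1"
  have "cmod (ip d n f g) \<le> (\<Sum>a\<in>idx d n. 1)"
    unfolding ip_def
  proof (rule sum_norm_le)
    fix a assume a: "a \<in> idx d n"
    have "cmod (cnj (f a) * g a) = cmod (f a) * cmod (g a)" by (simp add: norm_mult)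
    also have "\<dots> \<le> 1 * 1" by (intro mult_mono f g a) auto
    finally show "cmod (cnj (f a) * g a) \<le> 1" by simp
  qed
  then show ?thesis by simp
qed


definition ONrep where
  "ONrep d n \<phi> e0 e1 w0 w1 \<longleftrightarrow> (\<forall>a\<in>idx d n. \<forall>b\<in>idx d n. \<phi> a b = e0 a * w0 b + e1 a * w1 b) \<and>
     nsq d n e0 = 1 \<and> ip d n e0 e1 = 0 \<and> (nsq d n e1 = 1 \<or> (\<forall>a. e1 a = 0) \<and> (\<forall>b. w1 b = 0))"

lemma rep_bound:
  assumes on: "ONrep d n \<phi> e0 e1 w0 w1" and \<phi>1: "\<And>a b. a \<in> idx d n \<Longrightarrow> b \<in> idx d n \<Longrightarrow> cmod (\<phi> a b) \<le> 1"
    and b: "b \<in> idx d n"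
  shows "cmod (w0 b) \<le> real (card (idx d n))" "cmod (w1 b) \<le> real (card (idx d n))"
proof -
  have rep: "\<And>a. a \<in> idx d n \<Longrightarrow> \<phi> a b = e0 a * w0 b + e1 a * w1 b" using on b unfolding ONrep_def by blast
  have n0: "nsq d n e0 = 1" and o: "ip d n e0 e1 = 0" using on unfolding ONrep_def by auto
  have ipphi: "ip d n f (\<lambda>a. \<phi> a b) = ip d n f e0 * w0 b + ip d n f e1 * w1 b" for f
    by (subst ip_cong[OF rep]) (simp_all add: ip_lin)
  have "w0 b = ip d n e0 (\<lambda>a. \<phi> a b)" unfolding ipphi ip_self n0 o by simp
  also have "cmod \<dots> \<le> real (card (idx d n))"
    by (rule ip_bound) (use coord_le1[OF _ n0] \<phi>1 b in auto)
  finally show "cmod (w0 b) \<le> real (card (idx d n))" .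
  show "cmod (w1 b) \<le> real (card (idx d n))"
  proof (cases "nsq d n e1 = 1")
    case True
    have o': "ip d n e1 e0 = 0" using o by (simp add: ip_cnj[of d n e1 e0])
    have "w1 b = ip d n e1 (\<lambda>a. \<phi> a b)" unfolding ipphi ip_self True o' by simp
    also have "cmod \<dots> \<le> real (card (idx d n))"
      by (rule ip_bound) (use coord_le1[OF _ True] \<phi>1 b in auto)
    finally show ?thesis .
  next
    case False
    then have "w1 b = 0" using on unfolding ONrep_def by auto
    then show ?thesis by simp
  qed
qed

lemma gs:
  assumes rep: "\<forall>a\<in>idx d n. \<forall>b\<in>idx d n. \<phi> a b = u0 a * v0 b + u1 a * v1 b"
    and nz: "\<exists>a\<in>idx d n. \<exists>b\<in>idx d n. \<phi> a b \<noteq> 0"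
  shows "\<exists>e0 e1 w0 w1. ONrep d n \<phi> e0 e1 w0 w1"
proof (cases "nsq d n u0 = 0")
  case True
  then have u0z: "\<forall>a\<in>idx d n. u0 a = 0" by (simp add: nsq_zero_iff)
  have "nsq d n u1 \<noteq> 0"
  proof
    assume "nsq d n u1 = 0"
    then have "\<forall>a\<in>idx d n. u1 a = 0" by (simp add: nsq_zero_iff)
    then show False using nz rep u0z by auto
  qed
  then have n1: "nsq d n u1 > 0" using nsq_nonneg[of d n u1] by simp
  define s where "s = sqrt (nsq d n u1)"
  have s: "s > 0" "s * s = nsq d n u1" using n1 by (auto simp: s_def)
  define e0 where "e0 = (\<lambda>a. complex_of_real (1 / s) * u1 a)"
  define w0 where "w0 = (\<lambda>b. complex_of_real s * v1 b)"
  have "ONrep d n \<phi> e0 (\<lambda>_. 0) w0 (\<lambda>_. 0)"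
    unfolding ONrep_def
  proof (intro conjI ballI)
    fix a b assume "a \<in> idx d n" "b \<in> idx d n"
    then show "\<phi> a b = e0 a * w0 b + 0 * 0" using rep u0z s unfolding e0_def w0_def
      by (simp add: field_simps flip: of_real_mult)
  next
    show "nsq d n e0 = 1" unfolding e0_def nsq_scale s(2)[symmetric] using s(1) by (simp add: power2_eq_square norm_divide)
  next
    show "ip d n e0 (\<lambda>_. 0) = 0" unfolding ip_def by simp
  qed simp
  then show ?thesis by blast
next
  case False
  then have n0: "nsq d n u0 > 0" using nsq_nonneg[of d n u0] by simp
  define s where "s = sqrt (nsq d n u0)"
  have s: "s > 0" "s * s = nsq d n u0" using n0 by (auto simp: s_def)
  define e0 where "e0 = (\<lambda>a. complex_of_real (1 / s) * u0 a)"
  have ne0: "nsq d n e0 = 1" unfolding e0_def nsq_scale s(2)[symmetric] using s(1) by (simp add: power2_eq_square norm_divide)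
  define \<alpha> where "\<alpha> = ip d n e0 u1"
  define r where "r = (\<lambda>a. u1 a - \<alpha> * e0 a)"
  have oer: "ip d n e0 r = 0" unfolding r_def ip_diff_r ip_scale_r ip_self ne0 \<alpha>_def by simp
  define w0 where "w0 = (\<lambda>b. complex_of_real s * v0 b + \<alpha> * v1 b)"
  have rep2: "\<phi> a b = e0 a * w0 b + r a * v1 b" if "a \<in> idx d n" "b \<in> idx d n" for a b
  proof -
    have cs: "complex_of_real (1 / s) * complex_of_real s = 1" using s(1) by (simp flip: of_real_mult)
    have "e0 a * w0 b + r a * v1 b = u0 a * v0 b * (complex_of_real (1 / s) * complex_of_real s) + u1 a * v1 b"
      unfolding e0_def w0_def r_def by (simp add: algebra_simps)
    then show ?thesis using rep that cs by simp
  qed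
  show ?thesis
  proof (cases "nsq d n r = 0")
    case True
    then have rz: "\<forall>a\<in>idx d n. r a = 0" by (simp add: nsq_zero_iff)
    have "ONrep d n \<phi> e0 (\<lambda>_. 0) w0 (\<lambda>_. 0)"
      unfolding ONrep_def using rep2 rz ne0 by (auto simp: ip_def)
    then show ?thesis by blast
  next
    case False
    then have nr: "nsq d n r > 0" using nsq_nonneg[of d n r] by simp
    define t where "t = sqrt (nsq d n r)"
    have t: "t > 0" "t * t = nsq d n r" using nr by (auto simp: t_def)
    define e1 where "e1 = (\<lambda>a. complex_of_real (1 / t) * r a)"
    define w1 where "w1 = (\<lambda>b. complex_of_real t * v1 b)"
    have "ONrep d n \<phi> e0 e1 w0 w1"
      unfolding ONrep_def
    proof (intro conjI ballI)
      fix a b assume "a \<in> idx d n" "b \<in> idx d n"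
      then show "\<phi> a b = e0 a * w0 b + e1 a * w1 b" using rep2 t unfolding e1_def w1_def
        by (simp add: field_simps flip: of_real_mult)
    next
      show "nsq d n e0 = 1" by (rule ne0)
    next
      show "ip d n e0 e1 = 0" unfolding e1_def ip_scale_r oer by simp
    next
      show "nsq d n e1 = 1 \<or> (\<forall>a. e1 a = 0) \<and> (\<forall>b. w1 b = 0)"
        unfolding e1_def nsq_scale t(2)[symmetric] using t(1) by (simp add: power2_eq_square norm_divide)
    qed
    then show ?thesis by blast
  qed
qed

definition psi_of :: "(nat \<times> nat list \<Rightarrow> complex) \<Rightarrow> nat list \<Rightarrow> nat list \<Rightarrow> complex" where
  "psi_of p a b = p (0, a) * p (2, b) + p (1, a) * p (3, b)"

definition Kset :: "nat \<Rightarrow> nat \<Rightarrow> nat \<times> nat list \<Rightarrow> complex set" where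
  "Kset d n z = (if fst z < 4 \<and> snd z \<in> idx d n then cball 0 (real (card (idx d n))) else {0})"

definition Cset :: "nat \<Rightarrow> nat \<Rightarrow> (nat \<times> nat list \<Rightarrow> complex) set" where
  "Cset d n = {p. (\<forall>z. p z \<in> Kset d n z) \<and> (\<Sum>a\<in>idx d n. \<Sum>b\<in>idx d n. (cmod (psi_of p a b))\<^sup>2) = 1}"

lemma ONrep_scale: "ONrep d n \<psi> e0 e1 w0 w1 \<Longrightarrow> ONrep d n (\<lambda>a b. x * \<psi> a b) e0 e1 (\<lambda>b. x * w0 b) (\<lambda>b. x * w1 b)"
  unfolding ONrep_def by (auto simp: algebra_simps)

lemma sum2_le: "a \<in> idx d n \<Longrightarrow> b \<in> idx d n \<Longrightarrow> (cmod (f a b))\<^sup>2 \<le> (\<Sum>a\<in>idx d n. \<Sum>b\<in>idx d n. (cmod (f a b))\<^sup>2)"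
proof -
  assume a: "a \<in> idx d n" and b: "b \<in> idx d n"
  have "(cmod (f a b))\<^sup>2 \<le> (\<Sum>b\<in>idx d n. (cmod (f a b))\<^sup>2)"
    by (rule member_le_sum) (use b finite_idx in auto)
  also have "\<dots> \<le> (\<Sum>a\<in>idx d n. \<Sum>b\<in>idx d n. (cmod (f a b))\<^sup>2)"
    by (rule member_le_sum[of a _ "\<lambda>a. \<Sum>b\<in>idx d n. (cmod (f a b))\<^sup>2"]) (use a finite_idx in \<open>auto intro: sum_nonneg\<close>)
  finally show ?thesis .
qed

lemma sum2_le1: "(\<Sum>a\<in>idx d n. \<Sum>b\<in>idx d n. (cmod (f a b))\<^sup>2) = 1 \<Longrightarrow> a \<in> idx d n \<Longrightarrow> b \<in> idx d n \<Longrightarrow> cmod (f a b) \<le> 1"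
  using sum2_le[of a d n b f] by (simp add: power_le_one_iff abs_le_square_iff[symmetric])

lemma to_C:
  assumes sr: "schmidt_rank d n \<psi> = 2"
  shows "\<exists>p\<in>Cset d n. \<exists>t>0. \<forall>a\<in>idx d n. \<forall>b\<in>idx d n. \<psi> a b = complex_of_real t * psi_of p a b"
proof -
  obtain u0 u1 v0 v1 where rep: "\<forall>a\<in>idx d n. \<forall>b\<in>idx d n. \<psi> a b = u0 a * v0 b + u1 a * v1 b"
    using sr_rep(1)[OF sr] by blast
  obtain a1 b1 where ab1: "a1 \<in> idx d n" "b1 \<in> idx d n" "\<psi> a1 b1 \<noteq> 0" using sr_rep(2)[OF sr] by blast
  define S where "S = (\<Sum>a\<in>idx d n. \<Sum>b\<in>idx d n. (cmod (\<psi> a b))\<^sup>2)"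
  have "0 < (cmod (\<psi> a1 b1))\<^sup>2" using ab1 by simp
  also have "\<dots> \<le> S" unfolding S_def by (rule sum2_le[OF ab1(1,2)])
  finally have S0: "S > 0" .
  define t where "t = sqrt S"
  have t: "t > 0" "t * t = S" using S0 by (auto simp: t_def)
  obtain e0 e1 w0 w1 where on: "ONrep d n \<psi> e0 e1 w0 w1" using gs[OF rep] ab1 by blast
  define x where "x = complex_of_real (1 / t)"
  define \<phi> where "\<phi> = (\<lambda>a b. x * \<psi> a b)"
  have on2: "ONrep d n \<phi> e0 e1 (\<lambda>b. x * w0 b) (\<lambda>b. x * w1 b)" unfolding \<phi>_def by (rule ONrep_scale[OF on])
  have norm1: "(\<Sum>a\<in>idx d n. \<Sum>b\<in>idx d n. (cmod (\<phi> a b))\<^sup>2) = 1"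
  proof -
    have "(\<Sum>a\<in>idx d n. \<Sum>b\<in>idx d n. (cmod (\<phi> a b))\<^sup>2) = (1 / t)\<^sup>2 * S"
    proof -
      have pt: "\<And>a b. (cmod (\<phi> a b))\<^sup>2 = (1 / t)\<^sup>2 * (cmod (\<psi> a b))\<^sup>2"
        unfolding \<phi>_def x_def by (simp only: norm_mult norm_of_real power_mult_distrib power2_abs)
      show ?thesis unfolding pt S_def by (simp only: sum_distrib_left)
    qed
    also have "\<dots> = 1" using t S0 by (simp add: power2_eq_square field_simps)
    finally show ?thesis .
  qed
  have \<phi>1: "\<And>a b. a \<in> idx d n \<Longrightarrow> b \<in> idx d n \<Longrightarrow> cmod (\<phi> a b) \<le> 1" using sum2_le1[OF norm1] .
  have N1: "real (card (idx d n)) \<ge> 1" using ab1(1) finite_idx by (metis One_nat_def card_0_eq empty_iff less_one not_le of_nat_1 of_nat_le_iff)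
  have rep2: "\<forall>a\<in>idx d n. \<forall>b\<in>idx d n. \<phi> a b = e0 a * (x * w0 b) + e1 a * (x * w1 b)" and ne0: "nsq d n e0 = 1"
    and ne1: "nsq d n e1 = 1 \<or> (\<forall>a. e1 a = 0) \<and> (\<forall>b. x * w1 b = 0)"
    using on2 unfolding ONrep_def by auto
  define p where "p = (\<lambda>z::nat \<times> nat list. if snd z \<in> idx d n then
      (if fst z = 0 then e0 (snd z) else if fst z = 1 then e1 (snd z) else if fst z = 2 then x * w0 (snd z)
       else if fst z = 3 then x * w1 (snd z) else 0) else 0)"
  have psi_p: "psi_of p a b = \<phi> a b" if "a \<in> idx d n" "b \<in> idx d n" for a b
    using rep2 that unfolding psi_of_def p_def by simp
  have inK: "p z \<in> Kset d n z" for z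
  proof -
    obtain k a where z: "z = (k, a)" by (cases z)
    show ?thesis
    proof (cases "a \<in> idx d n")
      case False then show ?thesis unfolding z p_def Kset_def by simp
    next
      case a: True
      have e0b: "cmod (e0 a) \<le> real (card (idx d n))" using coord_le1[OF a ne0] N1 by linarith
      have e1b: "cmod (e1 a) \<le> real (card (idx d n))"
        using ne1 coord_le1[OF a, of e1] N1 by force
      have w0b: "cmod (x * w0 a) \<le> real (card (idx d n))" by (rule rep_bound(1)[OF on2 \<phi>1 a])
      have w1b: "cmod (x * w1 a) \<le> real (card (idx d n))" by (rule rep_bound(2)[OF on2 \<phi>1 a])
      show ?thesis unfolding z p_def Kset_def using a e0b e1b w0b w1b by (auto simp: dist_norm)
    qed
  qed
  have "p \<in> Cset d n"
    unfolding Cset_def using inK norm1 psi_p by (auto cong: sum.cong)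
  moreover have "\<forall>a\<in>idx d n. \<forall>b\<in>idx d n. \<psi> a b = complex_of_real t * psi_of p a b"
  proof (intro ballI)
    fix a b assume ab: "a \<in> idx d n" "b \<in> idx d n"
    have "complex_of_real t * x = 1" unfolding x_def using t by (simp flip: of_real_mult)
    then show "\<psi> a b = complex_of_real t * psi_of p a b"
      unfolding psi_p[OF ab] \<phi>_def by (simp add: mult.assoc[symmetric])
  qed
  ultimately show ?thesis using t by blast
qed

lemma coord_cont [continuous_intros]: "continuous_on S (\<lambda>p::'a \<Rightarrow> 'b::topological_space. p z)"
  by (rule continuous_on_subset[OF continuous_on_product_coordinates]) simp

lemma compact_Box: "compact {p. \<forall>z. p z \<in> Kset d n z}"
proof -
  have eq: "{p. \<forall>z. p z \<in> Kset d n z} = PiE UNIV (Kset d n)"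
    by (auto simp: PiE_def Pi_def extensional_def)
  have "compactin (product_topology (\<lambda>_. euclidean) UNIV) (PiE UNIV (Kset d n))"
    by (subst compactin_PiE) (auto simp: Kset_def)
  then show ?thesis unfolding eq euclidean_product_topology by simp
qed

lemma cont_norm: "continuous_on UNIV (\<lambda>p. \<Sum>a\<in>idx d n. \<Sum>b\<in>idx d n. (cmod (psi_of p a b))\<^sup>2)"
  unfolding psi_of_def by (intro continuous_intros)

lemma compact_C: "compact (Cset d n)"
proof -
  have "Cset d n = {p. \<forall>z. p z \<in> Kset d n z} \<inter> {p. (\<Sum>a\<in>idx d n. \<Sum>b\<in>idx d n. (cmod (psi_of p a b))\<^sup>2) = 1}"
    unfolding Cset_def by auto
  moreover have "closed {p. (\<Sum>a\<in>idx d n. \<Sum>b\<in>idx d n. (cmod (psi_of p a b))\<^sup>2) = 1}"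
    by (rule closed_Collect_eq[OF cont_norm]) simp
  ultimately show ?thesis using compact_Box by (simp add: compact_Int_closed)
qed

lemma cont_g0: "continuous_on S (\<lambda>p. Re (expval d n M (psi_of p)))"
  unfolding expval_def psi_of_def by (intro continuous_intros)


lemma g0_pos:
  assumes d: "d \<ge> 3" and c: "0 \<le> c" "c < 1 / (real d * (real d - 1))" and p: "p \<in> Cset d n"
  shows "Re (expval d n (ptrans (rho d c 0)) (psi_of p)) > 0"
proof -
  let ?R = "{..<d}\<times>{..<d}"
  have d2: "d \<ge> 2" using d by simp
  have g: "Re (expval d n (ptrans (rho d c 0)) (psi_of p)) = (\<Sum>ws\<in>lsts ?R n. (cmod (Sw d c n (psi_of p) ws))\<^sup>2)"
    unfolding expval_gram[OF d2 c(1) less_imp_le[OF c(2)]] by (simp add: Re_sum)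
  have fin: "finite (lsts ?R n)" by (rule finite_lsts) simp
  have ge: "(\<Sum>ws\<in>lsts ?R n. (cmod (Sw d c n (psi_of p) ws))\<^sup>2) \<ge> 0" by (intro sum_nonneg) simp
  have ne: "(\<Sum>ws\<in>lsts ?R n. (cmod (Sw d c n (psi_of p) ws))\<^sup>2) \<noteq> 0"
  proof
    assume "(\<Sum>ws\<in>lsts ?R n. (cmod (Sw d c n (psi_of p) ws))\<^sup>2) = 0"
    then have "\<forall>ws\<in>lsts ?R n. (cmod (Sw d c n (psi_of p) ws))\<^sup>2 = 0"
      using fin by (subst (asm) sum_nonneg_eq_0_iff) auto
    then have z: "\<forall>ws\<in>lsts ?R n. Sw d c n (\<lambda>a b. p (0, a) * p (2, b) + p (1, a) * p (3, b)) ws = 0"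
      unfolding psi_of_def by simp
    have mu0: "mu d c 0 > 0" using c d by (simp add: mu_def)
    have lam0: "lam d c > 0"
    proof -
      have "c - 1 / (real d * (real d - 1)) < 0" using c by simp
      then have "real d * (c - 1 / (real d * (real d - 1))) < 0" using d by (simp add: mult_pos_neg)
      then show ?thesis by (simp add: lam_def nu_def)
    qed
    have "psi_of p a b = 0" if "a \<in> idx d n" "b \<in> idx d n" for a b
      using kernel[OF d mu0 lam0 z that] unfolding psi_of_def .
    then have "(\<Sum>a\<in>idx d n. \<Sum>b\<in>idx d n. (cmod (psi_of p a b))\<^sup>2) = 0" by simp
    then show False using p unfolding Cset_def by simp
  qed
  show ?thesis using g ge ne by simp
qed

lemma min_pos:
  assumes d: "d \<ge> 3" and c: "0 \<le> c" "c < 1 / (real d * (real d - 1))"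
  shows "\<exists>m0>0. \<forall>p\<in>Cset d n. m0 \<le> Re (expval d n (ptrans (rho d c 0)) (psi_of p))"
proof (cases "Cset d n = {}")
  case True then show ?thesis by (intro exI[of _ 1]) simp
next
  case False
  obtain p0 where p0: "p0 \<in> Cset d n" "\<forall>p\<in>Cset d n. Re (expval d n (ptrans (rho d c 0)) (psi_of p0)) \<le> Re (expval d n (ptrans (rho d c 0)) (psi_of p))"
    using continuous_attains_inf[OF compact_C False cont_g0] by blast
  show ?thesis
    using g0_pos[OF d c p0(1)] p0(2) by blast
qed

lemma expval_scale:
  assumes "\<forall>a\<in>idx d n. \<forall>b\<in>idx d n. \<psi> a b = complex_of_real t * \<phi> a b"
  shows "expval d n M \<psi> = complex_of_real (t\<^sup>2) * expval d n M \<phi>"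
proof -
  have "expval d n M \<psi> = (\<Sum>a\<in>idx d n. \<Sum>b\<in>idx d n. \<Sum>a'\<in>idx d n. \<Sum>b'\<in>idx d n.
      complex_of_real (t\<^sup>2) * (cnj (\<phi> a b) * tpow n M a b a' b' * \<phi> a' b'))"
    unfolding expval_def using assms by (intro sum.cong refl) (simp add: power2_eq_square)
  also have "\<dots> = complex_of_real (t\<^sup>2) * expval d n M \<phi>"
    unfolding expval_def by (simp add: sum_distrib_left)
  finally show ?thesis .
qed

theorem mainTheorem10:
  fixes d n :: nat and c :: real
  assumes "d \<ge> 3" and "n \<ge> 1" and "0 \<le> c" and "c < 1 / (real d * (real d - 1))"
  shows "\<exists>\<epsilon>0 > 0. \<forall>\<epsilon>. 0 \<le> \<epsilon> \<and> \<epsilon> \<le> \<epsilon>0 \<and> c + \<epsilon> \<le> 1 / (real d * (real d - 1)) \<longrightarrow>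
           (\<forall>\<psi>. schmidt_rank d n \<psi> = 2 \<longrightarrow> 0 \<le> expval d n (ptrans (rho d c \<epsilon>)) \<psi>)"
proof -
  obtain m0 where m0: "m0 > 0" "\<And>p. p \<in> Cset d n \<Longrightarrow> m0 \<le> Re (expval d n (ptrans (rho d c 0)) (psi_of p))"
    using min_pos[OF assms(1,3,4)] by blast
  define L0 where "L0 = real (card (idx d n)) ^ 4 * (real n * Bc d c ^ (n - 1) * real d)"
  have L0: "L0 \<ge> 0" unfolding L0_def using Bc_nonneg[of d c] by simp
  define L where "L = L0 + 1"
  have L: "L > 0" unfolding L_def using L0 by simp
  define e0 where "e0 = min 1 (m0 / L)"
  have e0: "e0 > 0" unfolding e0_def using m0(1) L by simp
  have d1: "d \<ge> 1" using assms(1) by simp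
  show ?thesis
  proof (intro exI[of _ e0] conjI e0 allI impI)
    fix \<epsilon> \<psi>
    assume eps: "0 \<le> \<epsilon> \<and> \<epsilon> \<le> e0 \<and> c + \<epsilon> \<le> 1 / (real d * (real d - 1))"
    assume sr: "schmidt_rank d n \<psi> = 2"
    have e1: "\<epsilon> \<le> 1" "\<epsilon> \<le> m0 / L" "0 \<le> \<epsilon>" using eps unfolding e0_def by auto
    obtain p t where p: "p \<in> Cset d n" and t: "t > 0"
      and rep: "\<forall>a\<in>idx d n. \<forall>b\<in>idx d n. \<psi> a b = complex_of_real t * psi_of p a b"
      using to_C[OF sr] by blast
    have p1: "\<And>a b. a \<in> idx d n \<Longrightarrow> b \<in> idx d n \<Longrightarrow> cmod (psi_of p a b) \<le> 1"
      using p unfolding Cset_def by (auto intro: sum2_le1)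
    let ?E = "expval d n (ptrans (rho d c \<epsilon>)) (psi_of p)"
    let ?Ez = "expval d n (ptrans (rho d c 0)) (psi_of p)"
    have diff: "cmod (?E - ?Ez) \<le> L0 * \<epsilon>"
    proof -
      have "cmod (?E - ?Ez) \<le> real (card (idx d n)) ^ 4 * (real n * Bc d c ^ (n - 1) * (real d * \<epsilon>))"
        by (rule expval_diff[where \<phi> = "psi_of p"]) (use d1 e1 p1 in auto)
      then show ?thesis unfolding L0_def by (simp add: mult_ac)
    qed
    have "Re ?Ez - Re ?E \<le> cmod (?E - ?Ez)"
      using abs_Re_le_cmod[of "?E - ?Ez"] by simp
    then have "Re ?E \<ge> m0 - L0 * \<epsilon>" using diff m0(2)[OF p] by linarith
    moreover have "L0 * \<epsilon> \<le> m0"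
    proof -
      have "L0 * \<epsilon> \<le> L * \<epsilon>" unfolding L_def using e1(3) by (simp add: algebra_simps)
      also have "\<dots> \<le> L * (m0 / L)" using e1(2) L by (intro mult_left_mono) auto
      also have "\<dots> = m0" using L by simp
      finally show ?thesis .
    qed
    ultimately have ReE: "Re ?E \<ge> 0" by linarith
    have ImE: "Im ?E = 0" by (rule expval_Im)
    have "expval d n (ptrans (rho d c \<epsilon>)) \<psi> = complex_of_real (t\<^sup>2) * ?E"
      by (rule expval_scale[OF rep])
    moreover have "0 \<le> complex_of_real (t\<^sup>2) * ?E"
      using ReE ImE by (simp add: less_eq_complex_def)
    ultimately show "0 \<le> expval d n (ptrans (rho d c \<epsilon>)) \<psi>" by simp
  qed
qed

end
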